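(* Let $r\ge1$ and let $\mathcal{R}$ be a Rouquier block of $\mathcal{A}_e^r$ which is not a core block. Let $(\boldsymbol\lambda,\mathbf{s})\in\mathcal{R}$ and write $\eta(\lambda^{(k)},s_k)=(\boldsymbol\rho^k,\mathbf{t}^k)$ for $1\le k\le r$. Then $\sum_{k=1}^r t^k_{i+1}-\sum_{k=1}^r t^k_i\ge0$ for all $0\le i<e-1$.
   Context: Fix an integer $e\ge 2$. A partition is a weakly decreasing sequence $\lambda=(\lambda_1,\lambda_2,\dots)$ of non-negative integers with finite sum $|\lambda|$; $\Lambda$ denotes the set of partitions and $\Lambda^{(m)}$ the set of $m$-multipartitions, i.e. $m$-tuples $\boldsymbol\lambda=(\lambda^{(1)},\dots,\lambda^{(m)})$ of partitions, with $|\boldsymbol\lambda|=\sum_k|\lambda^{(k)}|$. A $\beta$-set is a subset $B\subseteq\mathbb{Z}$ containing all sufficiently small integers and no sufficiently large ones. For $\lambda\in\Lambda$ and $s\in\mathbb{Z}$ set $B_s(\lambda)=\{\lambda_i-i+s : i\ge 1\}$; every $\beta$-set equals $B_s(\lambda)$ for a unique pair $(\lambda,s)$. Let $\mathcal{A}_e=\Lambda\times\mathbb{Z}$ (abacus configurations with $e$ runners) and $\mathcal{A}_e^m=\Lambda^{(m)}\times\mathbb{Z}^m$. Blocks: for $(\boldsymbol\lambda,\mathbf{s})\in\mathcal{A}_e^m$, its $e$-residue multiset is the multiset of the values $s_k+y-x \bmod e$ over all nodes $(x,y,k)$ with $x\ge1$, $1\le y\le\lambda^{(k)}_x$, $1\le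 k\le m$. Define $(\boldsymbol\lambda,\mathbf{s})\approx_e(\boldsymbol\mu,\mathbf{s}')$ iff $\mathbf{s}=\mathbf{s}'$, $|\boldsymbol\lambda|=|\boldsymbol\mu|$ and the $e$-residue multisets coincide. Its equivalence classes are called blocks. The map $\eta$: for $(\lambda,s)\in\mathcal{A}_e$ with $B=B_s(\lambda)$ and $0\le i<e$, the set $C_i=\{(b-i)/e : b\in B,\ b\equiv i \bmod e\}$ is a $\beta$-set, so $C_i=B_{t_i}(\rho_i)$ for a unique $(\rho_i,t_i)\in\Lambda\times\mathbb{Z}$; set $\eta(\lambda,s)=((\rho_0,\dots,\rho_{e-1}),(t_0,\dots,t_{e-1}))$. The $e$-weight of $\lambda$ is $\mathrm{wt}(\lambda)=\sum_i|\rho_i|$ (it is positive iff $\lambda$ has a removable $e$-rim hook). Rouquier: $(\lambda,s)\in\mathcal{A}_e$ with $\eta(\lambda,s)=(\boldsymbol\rho,\mathbf{t})$ is a Rouquier partition if $\mathrm{wt}(\lambda)\le t_{i+1}-t_i+1$ for all $0\le i<e-1$. $(\boldsymbol\lambda,\mathbf{s})\in\mathcal{A}_e^r$ is a Rouquier multipartition if $(\lambda^{(k)},s_k)$ is a Rouquier partition for every $1\le k\le r$. A block of $\mathcal{A}_e^r$ is a Rouquier block if all its elements are Rouquier multipartitions. A block $\mathcal{R}$ of $\mathcal{A}_e^r$ is a core block if for every $(\boldsymbol\lambda,\mathbf{s})\in\mathcal{R}$ every component $\lambda^{(k)}$ has $e$-weight $0$ (no removable $e$-rim hooks). *)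

theory Defs
  imports Main "HOL-Library.Multiset"
begin

text \<open>Partitions: weakly decreasing lists of positive naturals (trailing zeros omitted).
  The i-th part (i \<ge> 1) is part lam i, which is 0 beyond the length.\<close>

definition is_partition :: "nat list \<Rightarrow> bool" where
  "is_partition lam \<longleftrightarrow> sorted_wrt (\<ge>) lam \<and> 0 \<notin> set lam"

definition part :: "nat list \<Rightarrow> nat \<Rightarrow> nat" where
  "part lam i = (if 1 \<le> i \<and> i \<le> length lam then lam ! (i - 1) else 0)"

definition psize :: "nat list \<Rightarrow> nat" where
  "psize lam = sum_list lam"

definition beta_set :: "int \<Rightarrow> nat list \<Rightarrow> int set" where
  "beta_set s lam = {int (part lam i) - int i + s | i. 1 \<le> i}"

definition runner :: "nat \<Rightarrow> int set \<Rightarrow> nat \<Rightarrow> int set" where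
  "runner e B i = {(b - int i) div int e | b. b \<in> B \<and> b mod int e = int i}"

text \<open>eta(lambda,s) = ((rho_0,...,rho_{e-1}),(t_0,...,t_{e-1})), where
  C_i = B_{t_i}(rho_i) for the unique pair (rho_i,t_i).\<close>
definition eta_pair :: "nat \<Rightarrow> nat list \<Rightarrow> int \<Rightarrow> nat \<Rightarrow> nat list \<times> int" where
  "eta_pair e lam s i =
     (THE (rho, t). is_partition rho \<and> runner e (beta_set s lam) i = beta_set t rho)"

definition eta_rho :: "nat \<Rightarrow> nat list \<Rightarrow> int \<Rightarrow> nat \<Rightarrow> nat list" where
  "eta_rho e lam s i = fst (eta_pair e lam s i)"

definition eta_t :: "nat \<Rightarrow> nat list \<Rightarrow> int \<Rightarrow> nat \<Rightarrow> int" where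
  "eta_t e lam s i = snd (eta_pair e lam s i)"

text \<open>e-weight wt(lambda) = sum_i |rho_i| (computed from eta(lambda,s); independent of s).\<close>
definition e_weight :: "nat \<Rightarrow> nat list \<Rightarrow> int \<Rightarrow> nat" where
  "e_weight e lam s = (\<Sum>i<e. psize (eta_rho e lam s i))"

text \<open>m-multipartitions with charges: lists of length m (component k is index k-1).\<close>
definition config :: "nat \<Rightarrow> (nat list list \<times> int list) set" where
  "config m = {(L, S). length L = m \<and> length S = m \<and> (\<forall>lam \<in> set L. is_partition lam)}"

definition mpsize :: "nat list list \<Rightarrow> nat" where
  "mpsize L = (\<Sum>lam \<leftarrow> L. psize lam)"

definition nodes :: "nat list \<Rightarrow> (nat \<times> nat) set" where
  "nodes lam = {(x, y). 1 \<le> x \<and> 1 \<le> y \<and> y \<le> part lam x}"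

definition residues :: "nat \<Rightarrow> int \<Rightarrow> nat list \<Rightarrow> int multiset" where
  "residues e s lam = image_mset (\<lambda>(x, y). (s + int y - int x) mod int e) (mset_set (nodes lam))"

definition mresidues :: "nat \<Rightarrow> nat list list \<times> int list \<Rightarrow> int multiset" where
  "mresidues e c = (\<Sum>(lam, s) \<leftarrow> zip (fst c) (snd c). residues e s lam)"

definition block_eq :: "nat \<Rightarrow> nat list list \<times> int list \<Rightarrow> nat list list \<times> int list \<Rightarrow> bool" where
  "block_eq e c d \<longleftrightarrow> snd c = snd d \<and> mpsize (fst c) = mpsize (fst d) \<and> mresidues e c = mresidues e d"

definition is_block :: "nat \<Rightarrow> nat \<Rightarrow> (nat list list \<times> int list) set \<Rightarrow> bool" where
  "is_block e m R \<longleftrightarrow> (\<exists>c0 \<in> config m. R = {c \<in> config m. block_eq e c0 c})"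

definition rouquier_partition :: "nat \<Rightarrow> nat list \<Rightarrow> int \<Rightarrow> bool" where
  "rouquier_partition e lam s \<longleftrightarrow>
     (\<forall>i. i + 1 < e \<longrightarrow> int (e_weight e lam s) \<le> eta_t e lam s (i + 1) - eta_t e lam s i + 1)"

definition rouquier_multipartition :: "nat \<Rightarrow> nat list list \<times> int list \<Rightarrow> bool" where
  "rouquier_multipartition e c \<longleftrightarrow>
     (\<forall>k < length (fst c). rouquier_partition e (fst c ! k) (snd c ! k))"

definition rouquier_block :: "nat \<Rightarrow> nat \<Rightarrow> (nat list list \<times> int list) set \<Rightarrow> bool" where
  "rouquier_block e m R \<longleftrightarrow> is_block e m R \<and> (\<forall>c \<in> R. rouquier_multipartition e c)"

definition core_block :: "nat \<Rightarrow> nat \<Rightarrow> (nat list list \<times> int list) set \<Rightarrow> bool" where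
  "core_block e m R \<longleftrightarrow> is_block e m R \<and>
     (\<forall>c \<in> R. \<forall>k < length (fst c). e_weight e (fst c ! k) (snd c ! k) = 0)"

end

theory Submission
  imports Defs
begin

definition bb :: "int \<Rightarrow> nat list \<Rightarrow> nat \<Rightarrow> int" where
  "bb s lam x = int (part lam x) - int x + s"

lemma beta_set_bb: "beta_set s lam = bb s lam ` {1..}"
  unfolding beta_set_def bb_def by auto

lemma part_pos:
  assumes "is_partition lam" "1 \<le> x" "x \<le> length lam" shows "part lam x \<ge> 1"
proof -
  have "lam ! (x - 1) \<in> set lam" using assms by (intro nth_mem) linarith
  then have "lam ! (x - 1) \<noteq> 0" using assms(1) unfolding is_partition_def by metis
  then show ?thesis using assms unfolding part_def by simp
qed

lemma part_big: "length lam < x \<Longrightarrow> part lam x = 0"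
  unfolding part_def by auto

lemma part_mono: "is_partition lam \<Longrightarrow> 1 \<le> x \<Longrightarrow> x \<le> y \<Longrightarrow> part lam y \<le> part lam x"
proof -
  assume p: "is_partition lam" and x: "1 \<le> x" and xy: "x \<le> y"
  show ?thesis
  proof (cases "y \<le> length lam")
    case True
    then show ?thesis using p x xy unfolding part_def is_partition_def
      by (cases "x = y") (auto simp: sorted_wrt_iff_nth_less)
  next
    case False then show ?thesis by (simp add: part_big)
  qed
qed

lemma bb_strict: "is_partition lam \<Longrightarrow> 1 \<le> x \<Longrightarrow> x < y \<Longrightarrow> bb s lam y < bb s lam x"
  using part_mono[of lam x y] unfolding bb_def by force

lemma bb_mono_iff:
  assumes "is_partition lam" "1 \<le> x" "1 \<le> y" shows "bb s lam y < bb s lam x \<longleftrightarrow> x < y"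
proof
  assume h: "bb s lam y < bb s lam x"
  show "x < y"
  proof (rule ccontr)
    assume "\<not> x < y"
    then have "y < x \<or> y = x" by auto
    then show False using bb_strict[OF assms(1) assms(3), of x s] h by auto
  qed
next
  assume "x < y" then show "bb s lam y < bb s lam x" using bb_strict assms by blast
qed

lemma bb_inj: assumes "is_partition lam" shows "inj_on (bb s lam) {1..}"
proof (rule inj_onI)
  fix x y assume x: "x \<in> {1::nat..}" and y: "y \<in> {1::nat..}" and eq: "bb s lam x = bb s lam y"
  show "x = y"
  proof (rule ccontr)
    assume "x \<noteq> y"
    then have "x < y \<or> y < x" by auto
    then show False using bb_strict[OF assms, of x y s] bb_strict[OF assms, of y x s] x y eq by auto
  qed
qed

lemma bb_big: "length lam < x \<Longrightarrow> bb s lam x = s - int x"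
  unfolding bb_def by (simp add: part_big)

lemma bb_ge: "bb s lam x \<ge> s - int x"
  unfolding bb_def by simp

lemma beta_low: "n < s - int (length lam) \<Longrightarrow> n \<in> beta_set s lam"
  unfolding beta_set_bb
  apply (rule image_eqI[where x="nat (s - n)"])
  using bb_big[of lam "nat (s - n)" s] by auto

lemma beta_above:
  assumes p: "is_partition lam" and T: "T \<le> s - int (length lam)"
  shows "{c \<in> beta_set s lam. T \<le> c} = bb s lam ` {1..nat (s - T)}"
proof (intro equalityI subsetI)
  fix c assume c: "c \<in> {c \<in> beta_set s lam. T \<le> c}"
  then obtain x where x: "x \<ge> 1" "c = bb s lam x" "T \<le> c" unfolding beta_set_bb by auto
  have "x \<le> nat (s - T)"
  proof (rule ccontr)
    assume a: "\<not> x \<le> nat (s - T)"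
    then have "length lam < x" using T by linarith
    then have "c = s - int x" using x bb_big by simp
    then show False using x a by linarith
  qed
  then show "c \<in> bb s lam ` {1..nat (s - T)}" using x by auto
next
  fix c assume c: "c \<in> bb s lam ` {1..nat (s - T)}"
  then obtain x where x: "1 \<le> x" "x \<le> nat (s - T)" "c = bb s lam x" by auto
  have "T \<le> c" using bb_ge[where s=s and lam=lam and x=x] x T by linarith
  then show "c \<in> {c \<in> beta_set s lam. T \<le> c}" using x unfolding beta_set_bb by auto
qed

lemma beta_gap: "is_partition lam \<Longrightarrow> s - int (length lam) \<notin> beta_set s lam"
proof
  assume p: "is_partition lam" and "s - int (length lam) \<in> beta_set s lam"
  then obtain x where x: "x \<ge> 1" "s - int (length lam) = bb s lam x" unfolding beta_set_bb by auto
  show False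
  proof (cases "x \<le> length lam")
    case True
    then have "part lam x \<ge> 1" using part_pos p x by auto
    then show ?thesis using x True unfolding bb_def by linarith
  next
    case False
    then show ?thesis using x bb_big[of lam x s] by simp
  qed
qed

lemma charge: "is_partition rho \<Longrightarrow> (\<forall>n<N. n \<in> beta_set t rho) \<Longrightarrow>
   N \<le> t - int (length rho) \<and> card {c \<in> beta_set t rho. N \<le> c} = nat (t - N)"
proof -
  assume p: "is_partition rho" and full: "\<forall>n<N. n \<in> beta_set t rho"
  have N: "N \<le> t - int (length rho)" using beta_gap[OF p, of t] full by force
  have "card {c \<in> beta_set t rho. N \<le> c} = card (bb t rho ` {1..nat (t - N)})"
    using beta_above[OF p N] by simp
  also have "\<dots> = nat (t - N)"
    using card_image[OF inj_on_subset[OF bb_inj[OF p]]] by auto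
  finally show ?thesis using N by simp
qed

lemma bb_nil: "bb t [] x = t - int x" unfolding bb_def part_def by simp

lemma beta_nil: "beta_set t [] = {n. n < t}"
proof (intro equalityI subsetI)
  fix n assume "n \<in> beta_set t []"
  then show "n \<in> {n. n < t}" unfolding beta_set_bb bb_nil by auto
next
  fix n assume "n \<in> {n. n < t}"
  then have "n = bb t [] (nat (t - n))" "nat (t - n) \<in> {1..}" unfolding bb_nil by auto
  then show "n \<in> beta_set t []" unfolding beta_set_bb by blast
qed

lemma beta_cons: "beta_set (t + 1) (m # rho) = insert (int m + t) (beta_set t rho)"
proof -
  have 1: "bb (t+1) (m # rho) 1 = int m + t" unfolding bb_def part_def by simp
  have p2: "part (m # rho) (Suc x) = part rho x" if "x \<ge> 1" for x
    using that by (cases x) (simp_all add: part_def)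
  have 2: "bb (t+1) (m # rho) (Suc x) = bb t rho x" if "x \<ge> 1" for x
    using p2[OF that] unfolding bb_def by simp
  have U: "{1::nat..} = insert 1 (Suc ` {1..})"
  proof (intro equalityI subsetI)
    fix x :: nat assume x: "x \<in> {1..}"
    have "x = 1 \<or> (x = Suc (x - 1) \<and> x - 1 \<in> {1..})" using x by auto
    then show "x \<in> insert 1 (Suc ` {1..})" by blast
  next
    fix x :: nat assume "x \<in> insert 1 (Suc ` {1..})"
    then show "x \<in> {1..}" by auto
  qed
  have 3: "bb (t+1) (m # rho) ` Suc ` {1..} = bb t rho ` {1..}"
    unfolding image_image using 2 by (intro image_cong) auto
  have "bb (t+1) (m # rho) ` {1..} = bb (t+1) (m # rho) ` (insert 1 (Suc ` {1..}))"
    using U by (rule arg_cong)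
  also have "\<dots> = insert (int m + t) (bb t rho ` {1..})"
    unfolding image_insert 3 1 ..
  finally show ?thesis unfolding beta_set_bb .
qed

lemma is_partition_nil: "is_partition []" unfolding is_partition_def by simp

lemma part_le_first: "is_partition lam \<Longrightarrow> y \<in> set lam \<Longrightarrow> y \<le> part lam 1"
proof -
  assume p: "is_partition lam" and y: "y \<in> set lam"
  then obtain i where i: "i < length lam" "lam ! i = y" by (meson in_set_conv_nth)
  have "part lam (Suc i) = y" using i unfolding part_def by simp
  then show ?thesis using part_mono[OF p, of 1 "Suc i"] by simp
qed

lemma beta_exists_aux:
  "\<forall>C. (\<forall>n<N. n \<in> C) \<longrightarrow> finite {c\<in>C. N \<le> c} \<longrightarrow> card {c\<in>C. N \<le> c} = k \<longrightarrow>
     (\<exists>rho t. is_partition rho \<and> C = beta_set t rho)"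
proof (induction k)
  case 0
  show ?case
  proof (intro allI impI)
    fix C :: "int set" assume full: "\<forall>n<N. n \<in> C" and fin: "finite {c\<in>C. N \<le> c}"
      and c: "card {c\<in>C. N \<le> c} = 0"
    have "{c\<in>C. N \<le> c} = {}" using fin c by simp
    then have "C = {n. n < N}" using full by force
    then show "\<exists>rho t. is_partition rho \<and> C = beta_set t rho"
      using is_partition_nil beta_nil by metis
  qed
next
  case (Suc k)
  show ?case
  proof (intro allI impI)
    fix C :: "int set" assume full: "\<forall>n<N. n \<in> C" and fin: "finite {c\<in>C. N \<le> c}"
      and c: "card {c\<in>C. N \<le> c} = Suc k"
    define F where "F = {c\<in>C. N \<le> c}"
    have Fne: "F \<noteq> {}" using c unfolding F_def by (metis card.empty Zero_not_Suc)
    define m where "m = Max F"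
    have mF: "m \<in> F" using Max_in[OF _ Fne] fin unfolding m_def F_def by blast
    have mge: "\<forall>c\<in>F. c \<le> m" using Max_ge fin unfolding m_def F_def by blast
    define C0 where "C0 = C - {m}"
    have full0: "\<forall>n<N. n \<in> C0" using full mF unfolding C0_def F_def by auto
    have F0: "{c\<in>C0. N \<le> c} = F - {m}" unfolding C0_def F_def by auto
    have fin0: "finite {c\<in>C0. N \<le> c}" using fin F0 unfolding F_def by simp
    have c0: "card {c\<in>C0. N \<le> c} = k" using F0 c mF fin unfolding F_def by simp
    obtain rho0 t0 where p0: "is_partition rho0" and C0: "C0 = beta_set t0 rho0"
      using Suc.IH full0 fin0 c0 by blast
    have less: "\<forall>c\<in>C0. c < m"
    proof
      fix c assume "c \<in> C0"
      then have "c \<in> C" "c \<noteq> m" unfolding C0_def by auto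
      then show "c < m" using mge mF unfolding F_def by force
    qed
    have b1: "bb t0 rho0 1 \<in> C0" unfolding C0 beta_set_bb by auto
    then have mb: "int (part rho0 1) - 1 + t0 < m" using less unfolding bb_def by fastforce
    have CC: "C = insert m C0" using mF unfolding C0_def F_def by auto
    show "\<exists>rho t. is_partition rho \<and> C = beta_set t rho"
    proof (cases "m \<le> t0")
      case True
      have "rho0 = []"
      proof (rule ccontr)
        assume "rho0 \<noteq> []"
        then have "part rho0 1 \<ge> 1" using part_pos[OF p0, of 1] by (cases rho0) auto
        then show False using mb True by linarith
      qed
      then have "m = t0" using mb True unfolding part_def by simp
      then have "C = {n. n < t0 + 1}" using CC C0 \<open>rho0 = []\<close> beta_nil by auto
      then show ?thesis using is_partition_nil beta_nil by metis
    next
      case False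
      define mu where "mu = nat (m - t0)"
      have mu: "int mu = m - t0" "mu > 0" using False unfolding mu_def by auto
      have "\<forall>y\<in>set rho0. y \<le> mu" using part_le_first[OF p0] mb mu by force
      then have p: "is_partition (mu # rho0)" using p0 mu unfolding is_partition_def by auto
      have "C = beta_set (t0 + 1) (mu # rho0)" unfolding beta_cons CC C0 using mu by simp
      then show ?thesis using p by blast
    qed
  qed
qed

lemma beta_exists: "(\<forall>n<N. n \<in> C) \<Longrightarrow> finite {c\<in>C. N \<le> c} \<Longrightarrow>
     \<exists>rho t. is_partition rho \<and> C = beta_set t rho"
  using beta_exists_aux by blast

lemma bb_greater: assumes p: "is_partition lam" and x: "x \<ge> 1"
  shows "{c \<in> beta_set s lam. bb s lam x < c} = bb s lam ` {1..<x}"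
proof (intro equalityI subsetI)
  fix c assume "c \<in> {c \<in> beta_set s lam. bb s lam x < c}"
  then obtain y where y: "y \<ge> 1" "c = bb s lam y" "bb s lam x < c" unfolding beta_set_bb by auto
  then have "y < x" using bb_mono_iff[OF p y(1) x, of s] by simp
  then show "c \<in> bb s lam ` {1..<x}" using y by auto
next
  fix c assume "c \<in> bb s lam ` {1..<x}"
  then obtain y where y: "1 \<le> y" "y < x" "c = bb s lam y" by auto
  then have "bb s lam x < c" using bb_strict[OF p y(1) y(2)] by simp
  then show "c \<in> {c \<in> beta_set s lam. bb s lam x < c}" using y unfolding beta_set_bb by auto
qed

lemma bb_greater_card: assumes p: "is_partition lam" and x: "x \<ge> 1"
  shows "card {c \<in> beta_set s lam. bb s lam x < c} = x - 1"
proof -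
  have "inj_on (bb s lam) {1..<x}" using bb_inj[OF p] by (rule inj_on_subset) auto
  then show ?thesis unfolding bb_greater[OF p x] by (simp add: card_image)
qed

lemma part_eq_list: assumes p1: "is_partition r1" and p2: "is_partition r2"
  and eq: "\<forall>x\<ge>1. part r1 x = part r2 x" shows "r1 = r2"
proof -
  have l: "length r1 = length r2"
  proof (rule ccontr)
    assume "length r1 \<noteq> length r2"
    then consider "length r1 < length r2" | "length r2 < length r1" by linarith
    then show False
    proof cases
      case 1
      then have "part r2 (length r2) \<ge> 1" using part_pos[OF p2, of "length r2"] by simp
      moreover have "part r1 (length r2) = 0" using 1 part_big by simp
      ultimately show False using eq[rule_format, of "length r2"] 1 by simp
    next
      case 2
      then have "part r1 (length r1) \<ge> 1" using part_pos[OF p1, of "length r1"] by simp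
      moreover have "part r2 (length r1) = 0" using 2 part_big by simp
      ultimately show False using eq[rule_format, of "length r1"] 2 by simp
    qed
  qed
  show ?thesis
  proof (rule nth_equalityI[OF l])
    fix i assume "i < length r1"
    then show "r1 ! i = r2 ! i" using eq[rule_format, of "Suc i"] l unfolding part_def by simp
  qed
qed

lemma beta_unique: assumes p1: "is_partition r1" and p2: "is_partition r2"
  and eq: "beta_set t1 r1 = beta_set t2 r2" shows "r1 = r2 \<and> t1 = t2"
proof -
  define N where "N = min (t1 - int (length r1)) (t2 - int (length r2))"
  have f1: "\<forall>n<N. n \<in> beta_set t1 r1" using beta_low unfolding N_def by auto
  have f2: "\<forall>n<N. n \<in> beta_set t2 r2" using beta_low unfolding N_def by auto
  have "nat (t1 - N) = nat (t2 - N)" using charge[OF p1 f1] charge[OF p2 f2] eq by simp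
  moreover have "N \<le> t1" "N \<le> t2" unfolding N_def by auto
  ultimately have t: "t1 = t2" by simp
  have "part r1 x = part r2 x" if x: "x \<ge> 1" for x
  proof -
    have "bb t1 r1 x \<in> beta_set t1 r1" unfolding beta_set_bb using x by auto
    then have "bb t1 r1 x \<in> beta_set t2 r2" using eq by simp
    then obtain y where y: "y \<ge> 1" "bb t1 r1 x = bb t2 r2 y" unfolding beta_set_bb by auto
    have "x - 1 = y - 1" using bb_greater_card[OF p1 x, of t1] bb_greater_card[OF p2 y(1), of t2] eq y(2) by simp
    then have "x = y" using x y by simp
    then show ?thesis using y(2) t unfolding bb_def by simp
  qed
  then show ?thesis using part_eq_list[OF p1 p2] t by simp
qed

lemma runner_mem:
  assumes e: "0 < e" and i: "i < e"
  shows "c \<in> runner e B i \<longleftrightarrow> int e * c + int i \<in> B"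
proof
  assume "c \<in> runner e B i"
  then obtain b where b: "b \<in> B" "b mod int e = int i" "c = (b - int i) div int e"
    unfolding runner_def by auto
  have 1: "b - int i = int e * (b div int e)" using b(2) mult_div_mod_eq[of "int e" b] by simp
  then have "(b - int i) div int e = b div int e" using e by simp
  then have "c = b div int e" using b by simp
  then show "int e * c + int i \<in> B" using b 1 by (metis diff_add_cancel)
next
  assume h: "int e * c + int i \<in> B"
  have m: "(int e * c + int i) mod int e = int i" using e i by simp
  have d: "(int e * c + int i - int i) div int e = c" using e by simp
  show "c \<in> runner e B i" unfolding runner_def using h m d by force
qed

lemma beta_max: "is_partition lam \<Longrightarrow> b \<in> beta_set s lam \<Longrightarrow> b \<le> bb s lam 1"
proof -
  assume p: "is_partition lam" and "b \<in> beta_set s lam"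
  then obtain x where x: "x \<ge> 1" "b = bb s lam x" unfolding beta_set_bb by auto
  then show ?thesis using bb_strict[OF p, of 1 x s] by (cases "x = 1") auto
qed

lemma runner_full:
  assumes e: "0 < e" and i: "i < e" and N: "int e * N + int i \<le> s - int (length lam)"
  shows "\<forall>n<N. n \<in> runner e (beta_set s lam) i"
proof (intro allI impI)
  fix n assume "n < N"
  then have "int e * n < int e * N" using e by simp
  then have "int e * n + int i < s - int (length lam)" using N by linarith
  then show "n \<in> runner e (beta_set s lam) i" unfolding runner_mem[OF e i]
    using beta_low by blast
qed

lemma runner_fin:
  assumes p: "is_partition lam" and e: "0 < e" and i: "i < e"
  shows "finite {c \<in> runner e (beta_set s lam) i. N \<le> c}"
proof -
  have "{c \<in> runner e (beta_set s lam) i. N \<le> c} \<subseteq> {N..max 0 (bb s lam 1)}"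
  proof
    fix c assume c: "c \<in> {c \<in> runner e (beta_set s lam) i. N \<le> c}"
    then have "int e * c + int i \<le> bb s lam 1" using beta_max[OF p] runner_mem[OF e i] by blast
    moreover have "c \<le> int e * c" if "c \<ge> 0"
    proof -
      have "c * 1 \<le> c * int e" using e that by (intro mult_left_mono) auto
      then show ?thesis by (simp add: mult.commute)
    qed
    ultimately show "c \<in> {N..max 0 (bb s lam 1)}" using c by fastforce
  qed
  then show ?thesis by (rule finite_subset) simp
qed

lemma eta_prop:
  assumes p: "is_partition lam" and e: "0 < e" and i: "i < e"
  shows "is_partition (eta_rho e lam s i) \<and>
         runner e (beta_set s lam) i = beta_set (eta_t e lam s i) (eta_rho e lam s i)"
proof -
  define N where "N = min 0 (s - int (length lam) - int i)"
  have "N \<le> 0" unfolding N_def by simp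
  then have "N * int e \<le> N * 1" using e by (intro mult_left_mono_neg) auto
  then have "int e * N \<le> N" by (simp add: mult.commute)
  then have N: "int e * N + int i \<le> s - int (length lam)" unfolding N_def by linarith
  obtain rho t where rt: "is_partition rho" "runner e (beta_set s lam) i = beta_set t rho"
    using beta_exists[OF runner_full[OF e i N] runner_fin[OF p e i]] by blast
  have "eta_pair e lam s i = (rho, t)"
    unfolding eta_pair_def
  proof (rule the_equality)
    show "case (rho, t) of (rho, t) \<Rightarrow> is_partition rho \<and> runner e (beta_set s lam) i = beta_set t rho"
      using rt by simp
  next
    fix x assume "case x of (rho, t) \<Rightarrow> is_partition rho \<and> runner e (beta_set s lam) i = beta_set t rho"
    then show "x = (rho, t)" using beta_unique rt by (cases x) fastforce
  qed
  then show ?thesis using rt unfolding eta_rho_def eta_t_def by simp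
qed

lemma eta_t_formula:
  assumes p: "is_partition lam" and e: "0 < e" and a: "a < e"
    and N: "int e * N + int a \<le> s - int (length lam)"
  shows "eta_t e lam s a = N + int (card {b \<in> beta_set s lam. b mod int e = int a \<and> int e * N + int a \<le> b})"
proof -
  let ?R = "runner e (beta_set s lam) a"
  have ep: "is_partition (eta_rho e lam s a)" "?R = beta_set (eta_t e lam s a) (eta_rho e lam s a)"
    using eta_prop[OF p e a] by auto
  have ch: "card {c \<in> ?R. N \<le> c} = nat (eta_t e lam s a - N)" "N \<le> eta_t e lam s a"
    using charge[OF ep(1), of N "eta_t e lam s a"] runner_full[OF e a N] ep(2) by auto
  define f where "f = (\<lambda>c. int e * c + int a)"
  have inj: "inj_on f {c \<in> ?R. N \<le> c}" unfolding f_def inj_on_def using e by simp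
  have img: "f ` {c \<in> ?R. N \<le> c} = {b \<in> beta_set s lam. b mod int e = int a \<and> int e * N + int a \<le> b}"
  proof (intro equalityI subsetI)
    fix b assume "b \<in> f ` {c \<in> ?R. N \<le> c}"
    then obtain c where c: "c \<in> ?R" "N \<le> c" "b = f c" by auto
    have "int e * N \<le> int e * c" using c(2) e by simp
    then show "b \<in> {b \<in> beta_set s lam. b mod int e = int a \<and> int e * N + int a \<le> b}"
      using c runner_mem[OF e a] a unfolding f_def by auto
  next
    fix b assume b: "b \<in> {b \<in> beta_set s lam. b mod int e = int a \<and> int e * N + int a \<le> b}"
    define c where "c = b div int e"
    have bc: "b = f c" unfolding f_def c_def using b mult_div_mod_eq[of "int e" b] by simp
    have "c \<in> ?R" using runner_mem[OF e a] b bc unfolding f_def by auto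
    moreover have "N \<le> c"
    proof -
      have "int e * N \<le> int e * c" using b bc unfolding f_def by auto
      then show ?thesis using e by simp
    qed
    ultimately show "b \<in> f ` {c \<in> ?R. N \<le> c}" using bc by auto
  qed
  have "card {b \<in> beta_set s lam. b mod int e = int a \<and> int e * N + int a \<le> b} = card {c \<in> ?R. N \<le> c}"
    using card_image[OF inj] img by simp
  then show ?thesis using ch by simp
qed

definition G :: "nat \<Rightarrow> int \<Rightarrow> int \<Rightarrow> int \<Rightarrow> int" where
  "G e T a m = int (card {m'. T \<le> m' \<and> m' \<le> m \<and> m' mod int e = a})"

lemma G_fin: "finite {m'. T \<le> m' \<and> m' \<le> m \<and> m' mod int e = a}"
  by (rule finite_subset[of _ "{T..m}"]) auto

lemma row_count:
  assumes T: "T \<le> s - int x"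
  shows "int (card {y \<in> {1..part lam x}. (s + int y - int x) mod int e = a}) = G e T a (bb s lam x) - G e T a (s - int x)"
proof -
  let ?P = "\<lambda>m'. m' mod int e = a"
  have split: "{m'. T \<le> m' \<and> m' \<le> bb s lam x \<and> ?P m'} =
     {m'. T \<le> m' \<and> m' \<le> s - int x \<and> ?P m'} \<union> {m'. s - int x < m' \<and> m' \<le> bb s lam x \<and> ?P m'}"
    using T bb_ge[where s=s and lam=lam and x=x] by auto
  have fin3: "finite {m'. s - int x < m' \<and> m' \<le> bb s lam x \<and> ?P m'}"
    by (rule finite_subset[of _ "{s - int x..bb s lam x}"]) auto
  have c1: "card {m'. T \<le> m' \<and> m' \<le> bb s lam x \<and> ?P m'} =
     card {m'. T \<le> m' \<and> m' \<le> s - int x \<and> ?P m'} + card {m'. s - int x < m' \<and> m' \<le> bb s lam x \<and> ?P m'}"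
    unfolding split by (rule card_Un_disjoint) (use G_fin fin3 in auto)
  define f where "f = (\<lambda>y::nat. s + int y - int x)"
  have inj: "inj_on f {y \<in> {1..part lam x}. (s + int y - int x) mod int e = a}" unfolding f_def inj_on_def by auto
  have img: "f ` {y \<in> {1..part lam x}. (s + int y - int x) mod int e = a} = {m'. s - int x < m' \<and> m' \<le> bb s lam x \<and> ?P m'}"
  proof (intro equalityI subsetI)
    fix m assume "m \<in> f ` {y \<in> {1..part lam x}. (s + int y - int x) mod int e = a}"
    then show "m \<in> {m'. s - int x < m' \<and> m' \<le> bb s lam x \<and> ?P m'}" unfolding f_def bb_def by auto
  next
    fix m assume m: "m \<in> {m'. s - int x < m' \<and> m' \<le> bb s lam x \<and> ?P m'}"
    define y where "y = nat (m - s + int x)"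
    have "y \<in> {y \<in> {1..part lam x}. (s + int y - int x) mod int e = a}" "m = f y"
      using m unfolding y_def f_def bb_def by auto
    then show "m \<in> f ` {y \<in> {1..part lam x}. (s + int y - int x) mod int e = a}" by blast
  qed
  have "card {y \<in> {1..part lam x}. (s + int y - int x) mod int e = a} = card {m'. s - int x < m' \<and> m' \<le> bb s lam x \<and> ?P m'}"
    using card_image[OF inj] img by simp
  then show ?thesis unfolding G_def using c1 by simp
qed

lemma nodes_Sigma: assumes X: "length lam \<le> X" shows "nodes lam = Sigma {1..X} (\<lambda>x. {1..part lam x})"
proof (intro equalityI subsetI)
  fix p assume "p \<in> nodes lam"
  then obtain x y where p: "p = (x, y)" "1 \<le> x" "1 \<le> y" "y \<le> part lam x" unfolding nodes_def by auto
  have "x \<le> length lam"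
  proof (rule ccontr)
    assume "\<not> x \<le> length lam"
    then have "part lam x = 0" using part_big by simp
    then show False using p by simp
  qed
  then show "p \<in> Sigma {1..X} (\<lambda>x. {1..part lam x})" using p X by auto
next
  fix p assume "p \<in> Sigma {1..X} (\<lambda>x. {1..part lam x})"
  then show "p \<in> nodes lam" unfolding nodes_def by auto
qed

lemma count_residues_card:
  "count (residues e s lam) a = card {p \<in> nodes lam. (\<lambda>(x, y). (s + int y - int x) mod int e) p = a}"
proof -
  have fin: "finite (nodes lam)" using nodes_Sigma[of lam "length lam"] by simp
  let ?f = "\<lambda>(x, y). (s + int y - int x) mod int e"
  have "count (residues e s lam) a = (\<Sum>y\<in>?f -` {a} \<inter> nodes lam. 1)"
    unfolding residues_def count_image_mset using fin by (intro sum.cong) auto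
  also have "\<dots> = card (?f -` {a} \<inter> nodes lam)" by simp
  also have "?f -` {a} \<inter> nodes lam = {p \<in> nodes lam. ?f p = a}" by auto
  finally show ?thesis .
qed

lemma count_formula:
  assumes p: "is_partition lam" and T: "T \<le> s - int (length lam)"
  shows "int (count (residues e s lam) a) =
     (\<Sum>b\<in>{b \<in> beta_set s lam. T \<le> b}. G e T a b) - (\<Sum>m\<in>{T..<s}. G e T a m)"
proof -
  define X where "X = nat (s - T)"
  have X: "length lam \<le> X" using T unfolding X_def by linarith
  let ?f = "\<lambda>(x, y). (s + int y - int x) mod int e"
  have "{p \<in> nodes lam. ?f p = a} = Sigma {1..X} (\<lambda>x. {y \<in> {1..part lam x}. (s + int y - int x) mod int e = a})"
    unfolding nodes_Sigma[OF X] by auto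
  then have "count (residues e s lam) a = (\<Sum>x\<in>{1..X}. card {y \<in> {1..part lam x}. (s + int y - int x) mod int e = a})"
    unfolding count_residues_card by simp
  then have "int (count (residues e s lam) a) = (\<Sum>x\<in>{1..X}. int (card {y \<in> {1..part lam x}. (s + int y - int x) mod int e = a}))"
    by (simp add: of_nat_sum)
  also have "\<dots> = (\<Sum>x\<in>{1..X}. G e T a (bb s lam x) - G e T a (s - int x))"
  proof (rule sum.cong)
    fix x assume "x \<in> {1..X}"
    then have "T \<le> s - int x" unfolding X_def by auto
    then show "int (card {y \<in> {1..part lam x}. (s + int y - int x) mod int e = a}) = G e T a (bb s lam x) - G e T a (s - int x)"
      by (rule row_count)
  qed simp
  also have "\<dots> = (\<Sum>x\<in>{1..X}. G e T a (bb s lam x)) - (\<Sum>x\<in>{1..X}. G e T a (s - int x))"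
    by (simp add: sum_subtractf)
  also have "(\<Sum>x\<in>{1..X}. G e T a (bb s lam x)) = (\<Sum>b\<in>{b \<in> beta_set s lam. T \<le> b}. G e T a b)"
  proof -
    have "inj_on (bb s lam) {1..X}" using bb_inj[OF p] by (rule inj_on_subset) auto
    then show ?thesis unfolding beta_above[OF p T] X_def by (simp add: sum.reindex)
  qed
  also have "(\<Sum>x\<in>{1..X}. G e T a (s - int x)) = (\<Sum>m\<in>{T..<s}. G e T a m)"
  proof -
    have inj: "inj_on (\<lambda>x. s - int x) {1..X}" unfolding inj_on_def by auto
    have img: "(\<lambda>x. s - int x) ` {1..X} = {T..<s}"
    proof (intro equalityI subsetI)
      fix m assume "m \<in> (\<lambda>x. s - int x) ` {1..X}" then show "m \<in> {T..<s}" unfolding X_def by auto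
    next
      fix m assume m: "m \<in> {T..<s}"
      then have "nat (s - m) \<in> {1..X}" "m = s - int (nat (s - m))" unfolding X_def by auto
      then show "m \<in> (\<lambda>x. s - int x) ` {1..X}" by blast
    qed
    show ?thesis using sum.reindex[OF inj, of "G e T a"] img by simp
  qed
  finally show ?thesis .
qed

lemma G_shift:
  assumes e: "0 < e" and T: "T \<le> b + 1"
  shows "G e T a (b + int e) = G e T a b + (if 0 \<le> a \<and> a < int e then 1 else 0)"
proof -
  let ?W = "{m'. b < m' \<and> m' \<le> b + int e \<and> m' mod int e = a}"
  have split: "{m'. T \<le> m' \<and> m' \<le> b + int e \<and> m' mod int e = a} =
      {m'. T \<le> m' \<and> m' \<le> b \<and> m' mod int e = a} \<union> ?W" using T e by auto
  have finW: "finite ?W" by (rule finite_subset[of _ "{b..b + int e}"]) auto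
  have c: "card {m'. T \<le> m' \<and> m' \<le> b + int e \<and> m' mod int e = a} =
      card {m'. T \<le> m' \<and> m' \<le> b \<and> m' mod int e = a} + card ?W"
    unfolding split by (rule card_Un_disjoint) (use G_fin finW in auto)
  have cW: "card ?W = (if 0 \<le> a \<and> a < int e then 1 else 0)"
  proof (cases "0 \<le> a \<and> a < int e")
    case True
    define w where "w = b + 1 + (a - b - 1) mod int e"
    have "?W = {w}"
    proof (intro equalityI subsetI)
      fix m assume m: "m \<in> ?W"
      define d where "d = m - b - 1"
      have d0: "0 \<le> d" "d < int e" using m unfolding d_def by auto
      have "d mod int e = d" using d0 by simp
      moreover have "d mod int e = (a - b - 1) mod int e"
      proof -
        have "(m - (b + 1)) mod int e = (m mod int e - (b + 1)) mod int e" by (simp add: mod_diff_left_eq)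
        moreover have "m mod int e = a" using m by simp
        ultimately show ?thesis unfolding d_def by (simp add: algebra_simps)
      qed
      ultimately have "d = (a - b - 1) mod int e" by simp
      then show "m \<in> {w}" unfolding w_def d_def by simp
    next
      fix m assume "m \<in> {w}"
      then have mw: "m = w" by simp
      have "w mod int e = (b + 1 + (a - b - 1)) mod int e" unfolding w_def by (simp add: mod_add_right_eq)
      also have "\<dots> = a" using True by simp
      finally have "w mod int e = a" .
      moreover have "0 \<le> (a - b - 1) mod int e" "(a - b - 1) mod int e < int e" using e by simp_all
      then have "b < w" "w \<le> b + int e" unfolding w_def by linarith+
      ultimately show "m \<in> ?W" using mw by simp
    qed
    then show ?thesis using True by simp
  next
    case False
    have "?W = {}"
    proof -
      have "m mod int e \<noteq> a" for m
      proof -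
        have "0 \<le> m mod int e" "m mod int e < int e" using e by simp_all
        then show ?thesis using False by auto
      qed
      then show ?thesis by auto
    qed
    then show ?thesis unfolding \<open>?W = {}\<close> using False by simp
  qed
  show ?thesis unfolding G_def using c cW by simp
qed

lemma G_step:
  assumes T: "T \<le> m + 1"
  shows "G e T a (m + 1) = G e T a m + (if (m + 1) mod int e = a then 1 else 0)"
proof -
  have split: "{m'. T \<le> m' \<and> m' \<le> m + 1 \<and> m' mod int e = a} =
      {m'. T \<le> m' \<and> m' \<le> m \<and> m' mod int e = a} \<union> (if (m + 1) mod int e = a then {m + 1} else {})"
  proof -
    have h: "x \<le> m" if "x \<le> m + 1" "x \<noteq> m + 1" for x::int using that by linarith
    show ?thesis
    proof (cases "(m + 1) mod int e = a")
      case True then show ?thesis using T by auto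
    next
      case False
      have "T \<le> x \<and> x \<le> m + 1 \<and> x mod int e = a \<longleftrightarrow> T \<le> x \<and> x \<le> m \<and> x mod int e = a" for x
        using False h by (cases "x = m + 1") auto
      then show ?thesis using False by simp
    qed
  qed
  have "card {m'. T \<le> m' \<and> m' \<le> m + 1 \<and> m' mod int e = a} =
      card {m'. T \<le> m' \<and> m' \<le> m \<and> m' mod int e = a} + card (if (m + 1) mod int e = a then {m + 1} else {} :: int set)"
    unfolding split by (rule card_Un_disjoint) (use G_fin in auto)
  then show ?thesis unfolding G_def by simp
qed

lemma swap_exists:
  assumes p: "is_partition lam" and b: "b \<in> beta_set s lam" and b': "b' \<notin> beta_set s lam"
  shows "\<exists>lam'. is_partition lam' \<and> beta_set s lam' = insert b' (beta_set s lam - {b})"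
proof -
  let ?B = "beta_set s lam"
  let ?B' = "insert b' (beta_set s lam - {b})"
  define N where "N = min (s - int (length lam)) (min b b')"
  have full: "\<forall>n<N. n \<in> ?B'" using beta_low unfolding N_def by fastforce
  have fullB: "\<forall>n<N. n \<in> ?B" using beta_low unfolding N_def by fastforce
  have NB: "N \<le> s - int (length lam)" unfolding N_def by simp
  have finB: "finite {c \<in> ?B. N \<le> c}" unfolding beta_above[OF p NB] by simp
  have eqset: "{c \<in> ?B'. N \<le> c} = insert b' ({c \<in> ?B. N \<le> c} - {b})" unfolding N_def by auto
  have fin: "finite {c \<in> ?B'. N \<le> c}" unfolding eqset using finB by simp
  obtain rho t where rt: "is_partition rho" "?B' = beta_set t rho" using beta_exists[OF full fin] by blast
  have c1: "card {c \<in> ?B'. N \<le> c} = nat (t - N)" "N \<le> t - int (length rho)"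
    using charge[OF rt(1), of N t] full rt(2) by auto
  have c2: "card {c \<in> ?B. N \<le> c} = nat (s - N)" using charge[OF p fullB] by simp
  have bin: "b \<in> {c \<in> ?B. N \<le> c}" using b unfolding N_def by auto
  have "card {c \<in> ?B'. N \<le> c} = card {c \<in> ?B. N \<le> c}"
  proof -
    have "card {c \<in> ?B. N \<le> c} > 0" using finB bin by (auto simp: card_gt_0_iff)
    then show ?thesis unfolding eqset using finB bin b' by simp
  qed
  then have "t = s" using c1 c2 NB by simp
  then show ?thesis using rt by metis
qed

definition U :: "nat \<Rightarrow> int multiset" where "U e = mset_set {0..<int e}"

lemma count_U: "count (U e) a = (if 0 \<le> a \<and> a < int e then 1 else 0)"
  unfolding U_def by simp

locale mv =
  fixes e :: nat and s b :: int and lam lam' :: "nat list"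
  assumes p: "is_partition lam" and p': "is_partition lam'" and e: "0 < e"
    and b: "b \<in> beta_set s lam" and b': "b + int e \<notin> beta_set s lam"
    and B': "beta_set s lam' = insert (b + int e) (beta_set s lam - {b})"
begin

definition T where "T = min (s - int (length lam)) (min (s - int (length lam')) b)"

lemma T: "T \<le> s - int (length lam)" "T \<le> s - int (length lam')" "T \<le> b"
  unfolding T_def by auto

lemma above': "{x \<in> beta_set s lam'. T \<le> x} = insert (b + int e) ({x \<in> beta_set s lam. T \<le> x} - {b})"
  unfolding B' using T e by auto

lemma finA: "finite {x \<in> beta_set s lam. T \<le> x}"
  unfolding beta_above[OF p T(1)] by simp

lemma residues_move: "residues e s lam' = residues e s lam + U e"
proof (rule multiset_eqI)
  fix a
  let ?A = "{x \<in> beta_set s lam. T \<le> x}"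
  have bA: "b \<in> ?A" using b T by simp
  have nA: "b + int e \<notin> ?A - {b}" using b' by simp
  have "int (count (residues e s lam') a) =
     (\<Sum>x\<in>insert (b + int e) (?A - {b}). G e T a x) - (\<Sum>m\<in>{T..<s}. G e T a m)"
    using count_formula[OF p' T(2), of e a] above' by simp
  also have "(\<Sum>x\<in>insert (b + int e) (?A - {b}). G e T a x) = G e T a (b + int e) + ((\<Sum>x\<in>?A. G e T a x) - G e T a b)"
    using finA nA bA by (simp add: sum_diff1)
  finally have "int (count (residues e s lam') a) = int (count (residues e s lam) a) + (if 0 \<le> a \<and> a < int e then 1 else 0)"
    using count_formula[OF p T(1), of e a] G_shift[OF e, of T b a] T by simp
  then show "count (residues e s lam') a = count (residues e s lam + U e) a"
    unfolding count_union count_U by (cases "0 \<le> a \<and> a < int e") simp_all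
qed

lemma t_move:
  assumes a: "a < e"
  shows "eta_t e lam' s a = eta_t e lam s a"
proof -
  define N where "N = min 0 (T - int a)"
  have "N \<le> 0" unfolding N_def by simp
  then have "N * int e \<le> N * 1" using e by (intro mult_left_mono_neg) auto
  then have eN: "int e * N \<le> N" by (simp add: mult.commute)
  have N: "int e * N + int a \<le> T" using eN unfolding N_def by linarith
  let ?D = "\<lambda>B. {x \<in> B. x mod int e = int a \<and> int e * N + int a \<le> x}"
  have fin: "finite (?D (beta_set s lam))"
  proof -
    have "{x \<in> beta_set s lam. int e * N + int a \<le> x} = bb s lam ` {1..nat (s - (int e * N + int a))}"
      using beta_above[OF p, of "int e * N + int a" s] N T(1) by simp
    then have "finite {x \<in> beta_set s lam. int e * N + int a \<le> x}" by simp
    then show ?thesis by (rule finite_subset[rotated]) auto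
  qed
  have "card (?D (beta_set s lam')) = card (?D (beta_set s lam))"
  proof (cases "b mod int e = int a")
    case True
    have "?D (beta_set s lam') = insert (b + int e) (?D (beta_set s lam) - {b})"
      unfolding B' using True N T e by auto
    moreover have "b \<in> ?D (beta_set s lam)" using True b N T by auto
    moreover have "card (?D (beta_set s lam)) > 0" using fin \<open>b \<in> ?D (beta_set s lam)\<close> by (auto simp: card_gt_0_iff)
    ultimately show ?thesis using fin b' by simp
  next
    case False
    have "(b + int e) mod int e = b mod int e" by simp
    then have "?D (beta_set s lam') = ?D (beta_set s lam)"
      unfolding B' using False by auto
    then show ?thesis by simp
  qed
  then show ?thesis
    using eta_t_formula[OF p e a, of N s] eta_t_formula[OF p' e a, of N s] N T by simp
qed

end

lemma psize_pos: "is_partition rho \<Longrightarrow> rho \<noteq> [] \<Longrightarrow> psize rho > 0"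
  unfolding psize_def is_partition_def by (cases rho) auto

lemma psize_zero: "is_partition rho \<Longrightarrow> psize rho = 0 \<Longrightarrow> rho = []"
  using psize_pos by fastforce

lemma weight_pos_of_gap:
  assumes p: "is_partition lam" and e: "0 < e" and c: "int e * (c + 1) + int a \<in> beta_set s lam"
    and nc: "int e * c + int a \<notin> beta_set s lam" and a: "a < e"
  shows "e_weight e lam s > 0"
proof -
  have ep: "is_partition (eta_rho e lam s a)" "runner e (beta_set s lam) a = beta_set (eta_t e lam s a) (eta_rho e lam s a)"
    using eta_prop[OF p e a] by auto
  have "eta_rho e lam s a \<noteq> []"
  proof
    assume "eta_rho e lam s a = []"
    then have R: "runner e (beta_set s lam) a = {n. n < eta_t e lam s a}" using ep beta_nil by simp
    have "c + 1 \<in> runner e (beta_set s lam) a" using runner_mem[OF e a] c by simp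
    then have "c \<in> runner e (beta_set s lam) a" unfolding R by simp
    then show False using runner_mem[OF e a] nc by simp
  qed
  then have "psize (eta_rho e lam s a) > 0" using psize_pos ep by simp
  moreover have "psize (eta_rho e lam s a) \<le> e_weight e lam s"
    unfolding e_weight_def using a by (intro member_le_sum) auto
  ultimately show ?thesis by simp
qed

lemma (in mv) weight_move: "e_weight e lam' s > 0"
proof -
  define a where "a = nat (b mod int e)"
  have a: "a < e" "int a = b mod int e" unfolding a_def using e by (simp_all add: nat_less_iff)
  define c where "c = b div int e"
  have bc: "b = int e * c + int a" unfolding c_def a(2) by simp
  have "int e * (c + 1) + int a \<in> beta_set s lam'" unfolding B' using bc by (simp add: algebra_simps)
  moreover have "int e * c + int a \<notin> beta_set s lam'" unfolding B' using bc e by simp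
  ultimately show ?thesis using weight_pos_of_gap[OF p' e _ _ a(1)] by blast
qed

lemma last_gap:
  assumes p: "is_partition rho" and ne: "rho \<noteq> []"
  shows "bb t rho (length rho) \<in> beta_set t rho \<and> bb t rho (length rho) - 1 \<notin> beta_set t rho"
proof
  have l: "length rho \<ge> 1" using ne by (cases rho) auto
  then show "bb t rho (length rho) \<in> beta_set t rho" unfolding beta_set_bb by auto
  have pl: "part rho (length rho) \<ge> 1" using part_pos[OF p l] by simp
  show "bb t rho (length rho) - 1 \<notin> beta_set t rho"
  proof
    assume "bb t rho (length rho) - 1 \<in> beta_set t rho"
    then obtain x where x: "x \<ge> 1" "bb t rho (length rho) - 1 = bb t rho x" unfolding beta_set_bb by auto
    consider "x < length rho" | "x = length rho" | "x > length rho" by linarith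
    then show False
    proof cases
      case 1 then show ?thesis using bb_strict[OF p x(1) 1, of t] x by simp
    next
      case 2 then show ?thesis using x by simp
    next
      case 3
      then have "bb t rho x = t - int x" by (rule bb_big)
      moreover have "bb t rho (length rho) \<ge> t - int (length rho) + 1" using pl unfolding bb_def by simp
      ultimately show ?thesis using x 3 by linarith
    qed
  qed
qed

lemma gap_of_weight:
  assumes p: "is_partition lam" and e: "0 < e" and w: "e_weight e lam s \<noteq> 0"
  shows "\<exists>b\<in>beta_set s lam. b - int e \<notin> beta_set s lam"
proof -
  obtain a where a: "a < e" "psize (eta_rho e lam s a) \<noteq> 0"
    using w unfolding e_weight_def by (metis lessThan_iff sum.neutral)
  have ep: "is_partition (eta_rho e lam s a)" "runner e (beta_set s lam) a = beta_set (eta_t e lam s a) (eta_rho e lam s a)"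
    using eta_prop[OF p e a(1)] by auto
  have ne: "eta_rho e lam s a \<noteq> []" using a(2) unfolding psize_def by auto
  define c where "c = bb (eta_t e lam s a) (eta_rho e lam s a) (length (eta_rho e lam s a))"
  have "c \<in> runner e (beta_set s lam) a" "c - 1 \<notin> runner e (beta_set s lam) a"
    using last_gap[OF ep(1) ne] ep(2) unfolding c_def by auto
  then have "int e * c + int a \<in> beta_set s lam" "int e * (c - 1) + int a \<notin> beta_set s lam"
    using runner_mem[OF e a(1)] by auto
  moreover have "int e * (c - 1) + int a = int e * c + int a - int e" by (simp add: algebra_simps)
  ultimately show ?thesis by auto
qed

lemma ind_sum: "finite A \<Longrightarrow> (\<Sum>x\<in>A. (if P x then 1 else 0 :: int)) = int (card {x\<in>A. P x})"
  by (simp add: sum.If_cases Int_def)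

lemma G_empty: "G e T a (T - 1) = 0"
proof -
  have "{m'. T \<le> m' \<and> m' \<le> T - 1 \<and> m' mod int e = a} = {}" by auto
  then show ?thesis unfolding G_def by (simp only: card.empty)
qed

lemma Gdiff:
  assumes e: "0 < e" and a: "a < e" and T: "T mod int e = 0" and m: "T - 1 \<le> m"
  shows "G e T (int a) m - G e T (int ((a + 1) mod e)) m =
         (if m mod int e = int a then 1 else 0) - (if a = e - 1 then 1 else 0)"
  using m
proof (induction m rule: int_ge_induct)
  case base
  have "(T - 1) mod int e = (T mod int e - 1) mod int e" by (simp add: mod_diff_left_eq)
  also have "\<dots> = int e - 1" using T e by (simp add: zmod_minus1)
  finally have "(T - 1) mod int e = int a \<longleftrightarrow> a = e - 1" using a by auto
  then show ?case using G_empty by simp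
next
  case (step m)
  have key: "(m + 1) mod int e = int ((a + 1) mod e) \<longleftrightarrow> m mod int e = int a"
  proof -
    have "int ((a + 1) mod e) = (int a + 1) mod int e" by (simp add: of_nat_mod add.commute)
    then have "(m + 1) mod int e = int ((a + 1) mod e) \<longleftrightarrow> int e dvd (m + 1 - (int a + 1))"
      by (simp add: mod_eq_dvd_iff)
    also have "\<dots> \<longleftrightarrow> m mod int e = int a mod int e" by (simp add: mod_eq_dvd_iff)
    also have "int a mod int e = int a" using a by simp
    finally show ?thesis .
  qed
  have s1: "T \<le> m + 1" using step by simp
  show ?case using G_step[OF s1, of e "int a"] G_step[OF s1, of e "int ((a + 1) mod e)"] step.IH key
    by (simp split: if_splits)
qed

lemma t_res_aux:
  assumes p: "is_partition lam" and e: "0 < e" and a: "a < e"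
    and N: "int e * N + int a \<le> s - int (length lam)"
  shows "eta_t e lam s a - (int (count (residues e s lam) (int a)) - int (count (residues e s lam) (int ((a + 1) mod e))))
       = N + int (card {m \<in> {int e * N..<s}. m mod int e = int a})"
proof -
  define T where "T = int e * N"
  have Tm: "T mod int e = 0" unfolding T_def by simp
  have TL: "T \<le> s - int (length lam)" using N unfolding T_def by simp
  define A where "A = {b \<in> beta_set s lam. T \<le> b}"
  have finA: "finite A" unfolding A_def beta_above[OF p TL] by simp
  have cardA: "card A = nat (s - T)"
  proof -
    have "inj_on (bb s lam) {1..nat (s - T)}" using bb_inj[OF p] by (rule inj_on_subset) auto
    then show ?thesis unfolding A_def beta_above[OF p TL] by (simp add: card_image)
  qed
  let ?a' = "int ((a + 1) mod e)"
  let ?d = "\<lambda>m. (if m mod int e = int a then 1 else 0) - (if a = e - 1 then 1 else 0 :: int)"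
  have dA: "(\<Sum>b\<in>A. G e T (int a) b - G e T ?a' b) = (\<Sum>b\<in>A. ?d b)"
  proof (rule sum.cong)
    fix b assume "b \<in> A" then have "T - 1 \<le> b" unfolding A_def by simp
    then show "G e T (int a) b - G e T ?a' b = ?d b" by (rule Gdiff[OF e a Tm])
  qed simp
  have dI: "(\<Sum>b\<in>{T..<s}. G e T (int a) b - G e T ?a' b) = (\<Sum>b\<in>{T..<s}. ?d b)"
  proof (rule sum.cong)
    fix b assume "b \<in> {T..<s}" then have "T - 1 \<le> b" by simp
    then show "G e T (int a) b - G e T ?a' b = ?d b" by (rule Gdiff[OF e a Tm])
  qed simp
  have "int (count (residues e s lam) (int a)) - int (count (residues e s lam) ?a') =
     (\<Sum>b\<in>A. G e T (int a) b - G e T ?a' b) - (\<Sum>b\<in>{T..<s}. G e T (int a) b - G e T ?a' b)"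
    using count_formula[OF p TL, of e "int a"] count_formula[OF p TL, of e ?a'] unfolding A_def
    by (simp add: sum_subtractf)
  also have "\<dots> = int (card {b\<in>A. b mod int e = int a}) - int (card {m \<in> {T..<s}. m mod int e = int a})"
    unfolding dA dI using finA cardA by (simp add: sum_subtractf ind_sum)
  finally have r: "int (count (residues e s lam) (int a)) - int (count (residues e s lam) ?a') =
     int (card {b\<in>A. b mod int e = int a}) - int (card {m \<in> {T..<s}. m mod int e = int a})" .
  have "{b \<in> beta_set s lam. b mod int e = int a \<and> int e * N + int a \<le> b} = {b\<in>A. b mod int e = int a}"
  proof (intro equalityI subsetI)
    fix b assume "b \<in> {b \<in> beta_set s lam. b mod int e = int a \<and> int e * N + int a \<le> b}"
    then show "b \<in> {b\<in>A. b mod int e = int a}" unfolding A_def T_def by auto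
  next
    fix b assume b: "b \<in> {b\<in>A. b mod int e = int a}"
    define q where "q = b div int e"
    have bq: "b = int e * q + int a" using b mult_div_mod_eq[of "int e" b] unfolding q_def by simp
    have "int e * N < int e * (q + 1)" using b bq a unfolding A_def T_def by (simp add: algebra_simps)
    then have "N < q + 1" using e by (simp add: mult_less_cancel_left)
    then have "int e * N \<le> int e * q" using e by simp
    then show "b \<in> {b \<in> beta_set s lam. b mod int e = int a \<and> int e * N + int a \<le> b}"
      using b bq unfolding A_def by auto
  qed
  then show ?thesis using eta_t_formula[OF p e a N] r unfolding T_def by simp
qed

lemma residues_nil: "residues e s [] = {#}"
proof -
  have "nodes [] = {}" unfolding nodes_def part_def by simp
  then show ?thesis unfolding residues_def by simp
qed

lemma t_res:
  assumes p: "is_partition lam" and e: "0 < e" and a: "a < e"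
  shows "eta_t e lam s a = eta_t e [] s a + int (count (residues e s lam) (int a))
           - int (count (residues e s lam) (int ((a + 1) mod e)))"
proof -
  define N where "N = min 0 (s - int (length lam) - int a)"
  have "N \<le> 0" unfolding N_def by simp
  then have "N * int e \<le> N * 1" using e by (intro mult_left_mono_neg) auto
  then have eN: "int e * N \<le> N" by (simp add: mult.commute)
  have N: "int e * N + int a \<le> s - int (length lam)" using eN unfolding N_def by linarith
  have N0: "int e * N + int a \<le> s - int (length ([]::nat list))" using N by simp
  show ?thesis using t_res_aux[OF p e a N] t_res_aux[OF is_partition_nil e a N0]
    unfolding residues_nil by simp
qed

lemma mres_sum: "length L = length S \<Longrightarrow>
   mresidues e (L, S) = (\<Sum>k<length L. residues e (S ! k) (L ! k))"
  unfolding mresidues_def by (simp add: sum_list_sum_nth atLeast0LessThan)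

lemma card_nodes: "card (nodes lam) = sum_list lam"
proof -
  have "card (nodes lam) = (\<Sum>x\<in>{1..length lam}. part lam x)"
    unfolding nodes_Sigma[of lam "length lam", simplified] by simp
  also have "\<dots> = (\<Sum>i<length lam. part lam (Suc i))"
  proof -
    have "{1..length lam} = Suc ` {..<length lam}"
    proof (intro equalityI subsetI)
      fix x assume x: "x \<in> {1..length lam}"
      then have "x = Suc (x - 1)" "x - 1 < length lam" by auto
      then show "x \<in> Suc ` {..<length lam}" by blast
    qed auto
    then show ?thesis by (simp add: sum.reindex)
  qed
  also have "\<dots> = (\<Sum>i<length lam. lam ! i)" unfolding part_def by (intro sum.cong) auto
  also have "\<dots> = sum_list lam" by (simp add: sum_list_sum_nth atLeast0LessThan)
  finally show ?thesis .
qed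

lemma psize_size: "psize lam = size (residues e s lam)"
  unfolding psize_def residues_def by (simp add: card_nodes)

lemma size_sum_mset: "size (sum f A) = (\<Sum>a\<in>A. size (f a :: 'b multiset))"
  by (induct A rule: infinite_finite_induct) simp_all

lemma mpsize_size: assumes l: "length L = length S" shows "mpsize L = size (mresidues e (L, S))"
proof -
  have "mpsize L = (\<Sum>k<length L. psize (L ! k))"
    unfolding mpsize_def by (simp add: sum_list_sum_nth atLeast0LessThan)
  also have "\<dots> = (\<Sum>k<length L. size (residues e (S ! k) (L ! k)))"
    by (intro sum.cong refl) (rule psize_size)
  also have "\<dots> = size (mresidues e (L, S))" unfolding mres_sum[OF l] size_sum_mset ..
  finally show ?thesis .
qed

definition Psi :: "nat \<Rightarrow> nat \<Rightarrow> nat \<Rightarrow> int list \<Rightarrow> int multiset \<Rightarrow> int" where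
  "Psi e r i S Mr = (\<Sum>k<r. eta_t e [] (S ! k) (i + 1) - eta_t e [] (S ! k) i)
     + (int (count Mr (int (i + 1))) - int (count Mr (int ((i + 2) mod e))))
     - (int (count Mr (int i)) - int (count Mr (int (i + 1))))"

lemma Phi_Psi:
  assumes c: "(L1, S1) \<in> config r" and e: "0 < e" and i: "i + 1 < e"
  shows "(\<Sum>k<r. eta_t e (L1 ! k) (S1 ! k) (i + 1)) - (\<Sum>k<r. eta_t e (L1 ! k) (S1 ! k) i)
         = Psi e r i S1 (mresidues e (L1, S1))"
proof -
  have l: "length L1 = r" "length S1 = r" using c unfolding config_def by auto
  have pk: "is_partition (L1 ! k)" if "k < r" for k using c that l unfolding config_def by auto
  let ?n = "\<lambda>k a. int (count (residues e (S1 ! k) (L1 ! k)) (int a))"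
  have cnt: "int (count (mresidues e (L1, S1)) (int a)) = (\<Sum>k<r. ?n k a)" for a
    unfolding mres_sum[of L1 S1, OF l(1)[folded l(2)]] count_sum l(1) by (simp add: of_nat_sum)
  have m1: "(i + 1) mod e = i + 1" using i by simp
  have "(\<Sum>k<r. eta_t e (L1 ! k) (S1 ! k) (i + 1)) - (\<Sum>k<r. eta_t e (L1 ! k) (S1 ! k) i)
      = (\<Sum>k<r. (eta_t e [] (S1 ! k) (i + 1) - eta_t e [] (S1 ! k) i)
                 + (?n k (i + 1) - ?n k ((i + 2) mod e)) - (?n k i - ?n k (i + 1)))"
    unfolding sum_subtractf[symmetric]
  proof (rule sum.cong)
    fix k assume "k \<in> {..<r}"
    then have k: "k < r" by simp
    have a1: "eta_t e (L1 ! k) (S1 ! k) (i + 1) = eta_t e [] (S1 ! k) (i + 1) + ?n k (i + 1) - ?n k ((i + 2) mod e)"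
      using t_res[OF pk[OF k] e i] by (simp add: add.commute)
    have a0: "eta_t e (L1 ! k) (S1 ! k) i = eta_t e [] (S1 ! k) i + ?n k i - ?n k (i + 1)"
      using t_res[OF pk[OF k] e, of i] i m1 by simp
    show "eta_t e (L1 ! k) (S1 ! k) (i + 1) - eta_t e (L1 ! k) (S1 ! k) i =
      eta_t e [] (S1 ! k) (i + 1) - eta_t e [] (S1 ! k) i + (?n k (i + 1) - ?n k ((i + 2) mod e)) - (?n k i - ?n k (i + 1))"
      using a0 a1 by simp
  qed simp
  also have "\<dots> = Psi e r i S1 (mresidues e (L1, S1))"
    unfolding Psi_def cnt by (simp add: sum.distrib sum_subtractf sum_distrib_left sum_negf)
  finally show ?thesis .
qed

lemma rouq_comp:
  assumes rb: "rouquier_block e r R" and c: "(L1, S1) \<in> R" and R: "R \<subseteq> config r"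
    and k: "k < r" and w: "e_weight e (L1 ! k) (S1 ! k) \<noteq> 0" and i: "i + 1 < e"
  shows "eta_t e (L1 ! k) (S1 ! k) (i + 1) - eta_t e (L1 ! k) (S1 ! k) i \<ge> 0"
proof -
  have l: "length L1 = r" using c R unfolding config_def by auto
  have "rouquier_partition e (L1 ! k) (S1 ! k)"
    using rb c k l unfolding rouquier_block_def rouquier_multipartition_def by auto
  then have "int (e_weight e (L1 ! k) (S1 ! k)) \<le> eta_t e (L1 ! k) (S1 ! k) (i + 1) - eta_t e (L1 ! k) (S1 ! k) i + 1"
    unfolding rouquier_partition_def using i by blast
  then show ?thesis using w by linarith
qed

lemma comp_nonneg:
  assumes rb: "rouquier_block e r R" and R: "R = {c \<in> config r. block_eq e c0 c}"
    and c': "(L', S') \<in> R" and j: "j < r" and w: "e_weight e (L' ! j) (S' ! j) \<noteq> 0"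
    and e: "0 < e" and i: "i + 1 < e" and k: "k < r"
  shows "eta_t e (L' ! k) (S' ! k) (i + 1) - eta_t e (L' ! k) (S' ! k) i \<ge> 0"
proof (cases "k = j")
  case True
  then show ?thesis using rouq_comp[OF rb c' _ j w i] R by auto
next
  case False
  have cfg: "(L', S') \<in> config r" and be: "block_eq e c0 (L', S')" using c' R by auto
  have l: "length L' = r" "length S' = r" using cfg unfolding config_def by auto
  have pk: "is_partition (L' ! m)" if "m < r" for m using cfg that l unfolding config_def by auto
  \<comment> \<open>remove a hook from component j\<close>
  obtain b where b: "b \<in> beta_set (S' ! j) (L' ! j)" "b - int e \<notin> beta_set (S' ! j) (L' ! j)"
    using gap_of_weight[OF pk[OF j] e w] by blast
  obtain lj where lj: "is_partition lj" "beta_set (S' ! j) lj = insert (b - int e) (beta_set (S' ! j) (L' ! j) - {b})"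
    using swap_exists[OF pk[OF j] b(1) b(2)] by blast
  have mvj: "mv e (S' ! j) (b - int e) lj (L' ! j)"
  proof
    show "is_partition lj" "is_partition (L' ! j)" "0 < e" using lj pk[OF j] e by auto
    show "b - int e \<in> beta_set (S' ! j) lj" using lj by simp
    show "b - int e + int e \<notin> beta_set (S' ! j) lj" using lj e by simp
    show "beta_set (S' ! j) (L' ! j) = insert (b - int e + int e) (beta_set (S' ! j) lj - {b - int e})"
      using lj b by auto
  qed
  have resj: "residues e (S' ! j) (L' ! j) = residues e (S' ! j) lj + U e"
    using mv.residues_move[OF mvj] .
  \<comment> \<open>add a hook to component k\<close>
  define bk where "bk = bb (S' ! k) (L' ! k) 1"
  have bk: "bk \<in> beta_set (S' ! k) (L' ! k)" unfolding bk_def beta_set_bb by auto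
  have bk': "bk + int e \<notin> beta_set (S' ! k) (L' ! k)" using beta_max[OF pk[OF k]] e unfolding bk_def by force
  obtain lk where lk: "is_partition lk" "beta_set (S' ! k) lk = insert (bk + int e) (beta_set (S' ! k) (L' ! k) - {bk})"
    using swap_exists[OF pk[OF k] bk bk'] by blast
  have mvk: "mv e (S' ! k) bk (L' ! k) lk"
    using pk[OF k] lk e bk bk' by unfold_locales auto
  have resk: "residues e (S' ! k) lk = residues e (S' ! k) (L' ! k) + U e"
    using mv.residues_move[OF mvk] .
  have tk: "eta_t e lk (S' ! k) a = eta_t e (L' ! k) (S' ! k) a" if "a < e" for a
    using mv.t_move[OF mvk that] .
  have wk: "e_weight e lk (S' ! k) \<noteq> 0" using mv.weight_move[OF mvk] by simp
  define L'' where "L'' = L'[j := lj, k := lk]"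
  have l'': "length L'' = r" unfolding L''_def using l by simp
  have L''k: "L'' ! k = lk" unfolding L''_def using k l by simp
  have L''j: "L'' ! j = lj" unfolding L''_def using j l False by simp
  have L''m: "L'' ! m = L' ! m" if "m \<noteq> j" "m \<noteq> k" for m unfolding L''_def using that by simp
  have cfg'': "(L'', S') \<in> config r"
  proof -
    have "\<forall>lam\<in>set L''. is_partition lam"
    proof
      fix lam assume "lam \<in> set L''"
      then obtain m where m: "m < r" "lam = L'' ! m" using l'' by (metis in_set_conv_nth)
      show "is_partition lam"
        using m lj lk pk L''k L''j L''m by (cases "m = j"; cases "m = k") auto
    qed
    then show ?thesis using l'' l unfolding config_def by auto
  qed
  let ?M = "\<lambda>m. residues e (S' ! m) (L' ! m)"
  let ?M'' = "\<lambda>m. residues e (S' ! m) (L'' ! m)"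
  have fin: "finite {..<r}" by simp
  have sumeq: "(\<Sum>m<r. ?M'' m) = (\<Sum>m<r. ?M m)"
  proof -
    have rest: "(\<Sum>m\<in>{..<r} - {j} - {k}. ?M'' m) = (\<Sum>m\<in>{..<r} - {j} - {k}. ?M m)"
      by (rule sum.cong) (auto simp: L''m)
    have "(\<Sum>m<r. ?M'' m) = ?M'' j + (?M'' k + (\<Sum>m\<in>{..<r} - {j} - {k}. ?M'' m))"
      using j k False by (simp add: sum.remove[of "{..<r}" j] sum.remove[of "{..<r} - {j}" k])
    also have "\<dots> = residues e (S' ! j) lj + (residues e (S' ! k) (L' ! k) + U e + (\<Sum>m\<in>{..<r} - {j} - {k}. ?M m))"
      using L''j L''k resk rest by simp
    also have "\<dots> = ?M j + (?M k + (\<Sum>m\<in>{..<r} - {j} - {k}. ?M m))"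
      using resj by (simp add: algebra_simps)
    also have "\<dots> = (\<Sum>m<r. ?M m)"
      using j k False by (simp add: sum.remove[of "{..<r}" j] sum.remove[of "{..<r} - {j}" k])
    finally show ?thesis .
  qed
  have mres: "mresidues e (L'', S') = mresidues e (L', S')"
    using mres_sum[of L'' S' e] mres_sum[of L' S' e] l l'' sumeq by simp
  have mps: "mpsize L'' = mpsize L'"
    using mpsize_size[of L'' S' e] mpsize_size[of L' S' e] l l'' mres by simp
  have "block_eq e c0 (L'', S')" using be mres mps unfolding block_eq_def by simp
  then have c'': "(L'', S') \<in> R" using cfg'' R by simp
  have "eta_t e (L'' ! k) (S' ! k) (i + 1) - eta_t e (L'' ! k) (S' ! k) i \<ge> 0"
    using rouq_comp[OF rb c'' _ k _ i] R L''k wk by auto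
  then show ?thesis using L''k tk[of i] tk[of "i + 1"] i by simp
qed

theorem lemma3p17:
  fixes e r :: nat and R :: "(nat list list \<times> int list) set"
    and L :: "nat list list" and S :: "int list"
  assumes "e \<ge> 2" and "r \<ge> 1"
    and "rouquier_block e r R" and "\<not> core_block e r R"
    and "(L, S) \<in> R"
  shows "\<forall>i. i + 1 < e \<longrightarrow>
           (\<Sum>k<r. eta_t e (L ! k) (S ! k) (i + 1)) - (\<Sum>k<r. eta_t e (L ! k) (S ! k) i) \<ge> 0"
proof (intro allI impI)
  fix i assume i: "i + 1 < e"
  have e: "0 < e" using assms(1) by simp
  have isb: "is_block e r R" using assms(3) unfolding rouquier_block_def by simp
  then obtain c0 where c0: "c0 \<in> config r" and R: "R = {c \<in> config r. block_eq e c0 c}"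
    unfolding is_block_def by blast
  obtain c' k0 where c': "c' \<in> R" "k0 < length (fst c')" "e_weight e (fst c' ! k0) (snd c' ! k0) \<noteq> 0"
    using assms(4) isb unfolding core_block_def by blast
  obtain L' S' where cc: "c' = (L', S')" by (cases c')
  have cfg': "(L', S') \<in> config r" using c' cc R by simp
  have j: "k0 < r" using c' cc cfg' unfolding config_def by simp
  have w: "e_weight e (L' ! k0) (S' ! k0) \<noteq> 0" using c' cc by simp
  have cR: "(L', S') \<in> R" using c' cc by simp
  have nonneg: "\<forall>k\<in>{..<r}. eta_t e (L' ! k) (S' ! k) (i + 1) - eta_t e (L' ! k) (S' ! k) i \<ge> 0"
    using comp_nonneg[OF assms(3) R cR j w e i] by simp
  have cfg: "(L, S) \<in> config r" using assms(5) R by simp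
  have be1: "block_eq e c0 (L, S)" "block_eq e c0 (L', S')" using assms(5) cR R by auto
  then have SS: "S = S'" and MM: "mresidues e (L, S) = mresidues e (L', S')" unfolding block_eq_def by auto
  have "(\<Sum>k<r. eta_t e (L ! k) (S ! k) (i + 1)) - (\<Sum>k<r. eta_t e (L ! k) (S ! k) i)
        = Psi e r i S (mresidues e (L, S))" using Phi_Psi[OF cfg e i] .
  also have "\<dots> = Psi e r i S' (mresidues e (L', S'))" using SS MM by simp
  also have "\<dots> = (\<Sum>k<r. eta_t e (L' ! k) (S' ! k) (i + 1)) - (\<Sum>k<r. eta_t e (L' ! k) (S' ! k) i)"
    using Phi_Psi[OF cfg' e i] by simp
  also have "\<dots> = (\<Sum>k<r. eta_t e (L' ! k) (S' ! k) (i + 1) - eta_t e (L' ! k) (S' ! k) i)"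
    by (simp add: sum_subtractf)
  also have "\<dots> \<ge> 0" using nonneg by (intro sum_nonneg) auto
  finally show "(\<Sum>k<r. eta_t e (L ! k) (S ! k) (i + 1)) - (\<Sum>k<r. eta_t e (L ! k) (S ! k) i) \<ge> 0" .
qed

end
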